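(* Let $W$ be a symmetric binary-input discrete memoryless channel with finite output alphabet $\mathcal{Y}$, let $S_1=|\{y\in\mathcal{Y}:1\cdot y=y\}|$ and $S_2=|\{y\in\mathcal{Y}:1\cdot y\ne y\}|$, and let $N=2^n$. Then the number $n_c(N,0,S_1,S_2)$ of distinct values of $W_N^{(0)}(\mathbf{y})$ as $\mathbf{y}$ ranges over $\mathcal{Y}^N$ satisfies $$n_c(N,0,S_1,S_2)\le\binom{N+S_2/2+S_1-1}{S_2/2+S_1-1}.$$
   Context: Symmetric channel: $W(y|x)$, $x\in\{0,1\}$, with an involution $y\mapsto 1\cdot y$ of $\mathcal{Y}$ such that $W(1\cdot y|0)=W(y|1)$ and $W(1\cdot y|1)=W(y|0)$ ($S_2$ is thus even). $W^N(\mathbf{y}|\mathbf{x})=\prod_j W(y_j|x_j)$. With $G_N=F^{\otimes n}$, $F=\begin{pmatrix}1&0\\1&1\end{pmatrix}$ over $\mathbb{F}_2$ (invertible, so its row space is $\mathbb{F}_2^N$), $W_N^{(0)}(\mathbf{y})=\frac{1}{2^{N-1}}\sum_{\mathbf{c}\in\mathbb{F}_2^N}W^N(\mathbf{y}|\mathbf{c})$. *)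

theory Defs
  imports Complex_Main
begin

text \<open>Binary input x in {0,1} is encoded as bool (False = 0, True = 1).
  A channel is W :: bool => 'y => real, W x y = W(y|x).
  Vectors in Y^N and F_2^N are lists of length N.\<close>

definition WN_prod :: "(bool \<Rightarrow> 'y \<Rightarrow> real) \<Rightarrow> 'y list \<Rightarrow> bool list \<Rightarrow> real" where
  "WN_prod W ys cs = (\<Prod>j<length ys. W (cs ! j) (ys ! j))"

definition WN0 :: "(bool \<Rightarrow> 'y \<Rightarrow> real) \<Rightarrow> nat \<Rightarrow> 'y list \<Rightarrow> real" where
  "WN0 W N ys = (1 / 2 ^ (N - 1)) * (\<Sum>cs\<in>{cs :: bool list. length cs = N}. WN_prod W ys cs)"

definition symmetric_bdmc :: "(bool \<Rightarrow> 'y \<Rightarrow> real) \<Rightarrow> ('y \<Rightarrow> 'y) \<Rightarrow> bool" where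
  "symmetric_bdmc W flip \<longleftrightarrow>
     (\<forall>x y. W x y \<ge> 0) \<and> (\<forall>x. (\<Sum>y\<in>UNIV. W x y) = 1) \<and>
     (\<forall>y. flip (flip y) = y) \<and>
     (\<forall>y. W False (flip y) = W True y) \<and> (\<forall>y. W True (flip y) = W False y)"

end

theory Submission
  imports Defs "HOL-Library.Multiset"
begin

lemma sum_prod_lists:
  fixes W :: "bool \<Rightarrow> 'y \<Rightarrow> real"
  shows "(\<Sum>cs\<in>{cs :: bool list. length cs = length ys}. \<Prod>j<length ys. W (cs ! j) (ys ! j))
         = (\<Prod>y\<leftarrow>ys. W False y + W True y)"
proof (induction ys)
  case Nil
  then show ?case by simp
next
  case (Cons y ys)
  let ?m = "length ys"
  have fin: "finite {cs :: bool list. length cs = ?m}"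
    using finite_lists_length_eq[of "UNIV :: bool set"] by simp
  have eq: "{cs :: bool list. length cs = Suc ?m} = (\<lambda>(b,cs). b#cs) ` (UNIV \<times> {cs. length cs = ?m})"
    by (auto simp: length_Suc_conv image_iff)
  have inj: "inj_on (\<lambda>(b,cs). b#cs) (UNIV \<times> {cs :: bool list. length cs = ?m})"
    by (auto simp: inj_on_def)
  have "(\<Sum>cs\<in>{cs :: bool list. length cs = length (y#ys)}. \<Prod>j<length (y#ys). W (cs ! j) ((y#ys) ! j))
      = (\<Sum>p\<in>UNIV \<times> {cs :: bool list. length cs = ?m}. \<Prod>j<Suc ?m. W ((fst p # snd p) ! j) ((y#ys) ! j))"
    by (simp only: length_Cons eq sum.reindex[OF inj] o_def case_prod_beta)
  also have "\<dots> = (\<Sum>p\<in>UNIV \<times> {cs :: bool list. length cs = ?m}. W (fst p) y * (\<Prod>j<?m. W (snd p ! j) (ys ! j)))"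
    by (simp only: prod.lessThan_Suc_shift nth_Cons_0 nth_Cons_Suc)
  also have "\<dots> = (\<Sum>b\<in>UNIV. \<Sum>cs\<in>{cs :: bool list. length cs = ?m}. W b y * (\<Prod>j<?m. W (cs ! j) (ys ! j)))"
    by (simp add: sum.cartesian_product case_prod_beta)
  also have "\<dots> = (\<Sum>b\<in>UNIV. W b y * (\<Sum>cs\<in>{cs :: bool list. length cs = ?m}. (\<Prod>j<?m. W (cs ! j) (ys ! j))))"
    by (simp add: sum_distrib_left)
  also have "\<dots> = (W False y + W True y) * (\<Prod>y\<leftarrow>ys. W False y + W True y)"
    using Cons by (simp add: UNIV_bool distrib_right)
  finally show ?case by simp
qed

lemma card_orbits:
  fixes flip :: "'y::finite \<Rightarrow> 'y"
  assumes inv: "\<And>y. flip (flip y) = y"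
  shows "card ((\<lambda>y. {y, flip y}) ` UNIV) = card {y. flip y = y} + card {y. flip y \<noteq> y} div 2"
proof -
  define orb where "orb = (\<lambda>y. {y, flip y})"
  define A where "A = {y. flip y = y}"
  define B where "B = {y. flip y \<noteq> y}"
  have U: "orb ` UNIV = orb ` A \<union> orb ` B" unfolding A_def B_def by auto
  have disj: "orb ` A \<inter> orb ` B = {}"
    unfolding orb_def A_def B_def by (auto simp: doubleton_eq_iff)
  have cA: "card (orb ` A) = card A"
    by (rule card_image) (auto simp: inj_on_def orb_def A_def)
  have UB: "\<Union>(orb ` B) = B" unfolding orb_def B_def using inv by auto
  have c2: "\<forall>c\<in>orb ` B. card c = 2" unfolding orb_def B_def by auto
  have dj: "\<forall>c1\<in>orb ` B. \<forall>c2\<in>orb ` B. c1 \<noteq> c2 \<longrightarrow> c1 \<inter> c2 = {}"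
      unfolding orb_def B_def using inv by auto metis+
  have "2 * card (orb ` B) = card (\<Union>(orb ` B))"
    using card_partition[of "orb ` B" 2] c2 dj by auto
  hence cB: "card (orb ` B) = card B div 2" using UB by simp
  show ?thesis
    using U disj cA cB card_Un_disjoint[of "orb ` A" "orb ` B"]
    by (simp add: orb_def A_def B_def)
qed

theorem theorem5:
  fixes W :: "bool \<Rightarrow> 'y::finite \<Rightarrow> real" and flip :: "'y \<Rightarrow> 'y" and n :: nat
  assumes "symmetric_bdmc W flip"
  defines "S1 \<equiv> card {y. flip y = y}" and "S2 \<equiv> card {y. flip y \<noteq> y}" and "N \<equiv> 2 ^ n"
  shows "card (WN0 W N ` {ys :: 'y list. length ys = N})
           \<le> (N + S2 div 2 + S1 - 1) choose (S2 div 2 + S1 - 1)"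
proof -
  have inv: "\<And>y. flip (flip y) = y" and s1: "\<And>y. W False (flip y) = W True y"
    and s2: "\<And>y. W True (flip y) = W False y"
    using assms(1) unfolding symmetric_bdmc_def by auto
  define orb where "orb = (\<lambda>y. {y, flip y})"
  define g where "g = (\<lambda>y. W False y + W True y)"
  define g' where "g' = (\<lambda>S. g (SOME y. y \<in> S))"
  define Orbs where "Orbs = orb ` UNIV"
  define K where "K = card Orbs"
  define c :: real where "c = 1 / 2 ^ (N - 1)"
  define F where "F = (\<lambda>M. c * prod_mset (image_mset g' M))"
  have gflip: "g (flip y) = g y" for y unfolding g_def using s1 s2 by simp
  have g'orb: "g' (orb y) = g y" for y
  proof -
    have "(SOME z. z \<in> orb y) \<in> orb y" by (rule someI[of _ y]) (simp add: orb_def)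
    then show ?thesis unfolding g'_def orb_def using gflip by auto
  qed
  have K: "K = S1 + S2 div 2"
    unfolding K_def Orbs_def orb_def S1_def S2_def by (rule card_orbits[OF inv])
  have Kpos: "K \<ge> 1"
  proof -
    have "Orbs \<noteq> {}" unfolding Orbs_def by simp
    moreover have "finite Orbs" unfolding Orbs_def by simp
    ultimately show ?thesis unfolding K_def by (simp add: Suc_le_eq card_gt_0_iff)
  qed
  have sub: "WN0 W N ` {ys :: 'y list. length ys = N} \<subseteq> F ` multisets_of_size Orbs N"
  proof
    fix v assume "v \<in> WN0 W N ` {ys :: 'y list. length ys = N}"
    then obtain ys :: "'y list" where len: "length ys = N" and v: "v = WN0 W N ys" by auto
    have "v = c * (\<Prod>y\<leftarrow>ys. g y)"
      unfolding v WN0_def WN_prod_def c_def g_def using sum_prod_lists[of W ys] len by simp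
    also have "(\<Prod>y\<leftarrow>ys. g y) = prod_list (map g' (map orb ys))"
      by (simp add: g'orb o_def)
    also have "\<dots> = prod_mset (image_mset g' (mset (map orb ys)))"
      by (simp flip: prod_mset_prod_list add: image_mset.compositionality)
    finally have "v = F (mset (map orb ys))" unfolding F_def .
    moreover have "mset (map orb ys) \<in> multisets_of_size Orbs N"
      unfolding multisets_of_size_def Orbs_def using len by auto
    ultimately show "v \<in> F ` multisets_of_size Orbs N" by blast
  qed
  have finO: "finite Orbs" unfolding Orbs_def by simp
  have "card (WN0 W N ` {ys :: 'y list. length ys = N}) \<le> card (F ` multisets_of_size Orbs N)"
    by (rule card_mono[OF _ sub]) (use finO finite_multisets_of_size[OF finO] in auto)
  also have "\<dots> \<le> card (multisets_of_size Orbs N)"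
    by (rule card_image_le) (use finO in auto)
  also have "\<dots> = (K + N - 1) choose N"
    unfolding K_def by (rule card_multisets_of_size[OF finO])
  also have "\<dots> = (K + N - 1) choose (K - 1)"
    using Kpos binomial_symmetric[of N "K + N - 1"] by simp
  also have "\<dots> = (N + S2 div 2 + S1 - 1) choose (S2 div 2 + S1 - 1)"
    using K by (simp add: add.commute add.left_commute)
  finally show ?thesis .
qed

end
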